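(* Let $\alpha:\mathbf A\to\mathbf B$ be a surjective homomorphism of $\tau$-algebras, and write $\alpha^\omega:A^\omega\to B^\omega$ for its coordinatewise extension. Then: (1) for every function $\varphi:A^\omega\to A$ there is at most one $\psi:B^\omega\to B$ with $\psi\circ\alpha^\omega=\alpha\circ\varphi$; when it exists, denote it $\alpha^\star(\varphi)$; (2) the set $C$ of all $\varphi:A^\omega\to A$ for which $\alpha^\star(\varphi)$ exists is the universe of a subalgebra $\mathcal C$ of $\mathcal O^{(\omega)}_{\mathbf A}$; (3) $\alpha^\star:\mathcal C\to\mathcal O^{(\omega)}_{\mathbf B}$ is a surjective homomorphism of infinitary clone $\tau$-algebras.
   Context: $\tau$ is a set of $\omega$-ary operation symbols; a $\tau$-algebra has operations $f^{\mathbf A}:A^\omega\to A$. For a $\tau$-algebra $\mathbf A$, $\mathcal O^{(\omega)}_{\mathbf A}$ is the algebra whose universe is all functions $A^\omega\to A$, with constants $e_i(s)=s_i$ ($i\in\omega$), a constant $f^{\mathbf A}$ for each $f\in\tau$, and the $\omega$-ary operation $q(g_0,g_1,\dots)(s)=g_0(g_1(s),g_2(s),\dots)$; this is an infinitary clone $\tau$-algebra (an algebra with constants $e_i$, $f$ and $\omega$-ary $q$ satisfying $q(e_i,x_0,x_1,\dots)=x_i$, $q(x,e_0,e_1,\dots)=x$, and $q(q(x,\boldsymbol y),\boldsymbol z)=q(x,q(y_0,\boldsymbol z),q(y_1,\boldsymbol z),\dots)$). *)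

theory Defs
  imports Main
begin

text \<open>A tau-algebra with universe the type 'a and omega-ary operations indexed by 'f
  (the symbol set tau is the type 'f):  ops f : A^omega -> A.\<close>

definition tau_hom :: "('f \<Rightarrow> (nat \<Rightarrow> 'a) \<Rightarrow> 'a) \<Rightarrow> ('f \<Rightarrow> (nat \<Rightarrow> 'b) \<Rightarrow> 'b) \<Rightarrow> ('a \<Rightarrow> 'b) \<Rightarrow> bool" where
  "tau_hom opsA opsB \<alpha> \<longleftrightarrow> (\<forall>f s. \<alpha> (opsA f s) = opsB f (\<lambda>i. \<alpha> (s i)))"

definition omega_ext :: "('a \<Rightarrow> 'b) \<Rightarrow> (nat \<Rightarrow> 'a) \<Rightarrow> (nat \<Rightarrow> 'b)" where
  "omega_ext \<alpha> s = (\<lambda>i. \<alpha> (s i))"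

record ('c, 'f) clone_alg =
  cuniv :: "'c set"
  ce :: "nat \<Rightarrow> 'c"
  cf :: "'f \<Rightarrow> 'c"
  cq :: "(nat \<Rightarrow> 'c) \<Rightarrow> 'c"

definition qcomp :: "(nat \<Rightarrow> ((nat \<Rightarrow> 'a) \<Rightarrow> 'a)) \<Rightarrow> (nat \<Rightarrow> 'a) \<Rightarrow> 'a" where
  "qcomp g s = g 0 (\<lambda>i. g (Suc i) s)"

definition O_alg :: "('f \<Rightarrow> (nat \<Rightarrow> 'a) \<Rightarrow> 'a) \<Rightarrow> (((nat \<Rightarrow> 'a) \<Rightarrow> 'a), 'f) clone_alg" where
  "O_alg opsA = \<lparr> cuniv = UNIV, ce = (\<lambda>i s. s i), cf = opsA, cq = qcomp \<rparr>"

definition clone_subuniverse :: "'c set \<Rightarrow> ('c, 'f) clone_alg \<Rightarrow> bool" where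
  "clone_subuniverse C K \<longleftrightarrow> C \<subseteq> cuniv K \<and> (\<forall>i. ce K i \<in> C) \<and> (\<forall>f. cf K f \<in> C)
     \<and> (\<forall>g. (\<forall>i. g i \<in> C) \<longrightarrow> cq K g \<in> C)"

definition subalg :: "('c, 'f) clone_alg \<Rightarrow> 'c set \<Rightarrow> ('c, 'f) clone_alg" where
  "subalg K C = K\<lparr> cuniv := C \<rparr>"

definition clone_hom :: "('c, 'f) clone_alg \<Rightarrow> ('d, 'f) clone_alg \<Rightarrow> ('c \<Rightarrow> 'd) \<Rightarrow> bool" where
  "clone_hom K L h \<longleftrightarrow> (\<forall>x\<in>cuniv K. h x \<in> cuniv L)
     \<and> (\<forall>i. h (ce K i) = ce L i) \<and> (\<forall>f. h (cf K f) = cf L f)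
     \<and> (\<forall>g. (\<forall>i. g i \<in> cuniv K) \<longrightarrow> h (cq K g) = cq L (\<lambda>i. h (g i)))"

definition is_lift :: "('a \<Rightarrow> 'b) \<Rightarrow> ((nat \<Rightarrow> 'a) \<Rightarrow> 'a) \<Rightarrow> ((nat \<Rightarrow> 'b) \<Rightarrow> 'b) \<Rightarrow> bool" where
  "is_lift \<alpha> \<phi> \<psi> \<longleftrightarrow> \<psi> \<circ> omega_ext \<alpha> = \<alpha> \<circ> \<phi>"

definition alpha_star :: "('a \<Rightarrow> 'b) \<Rightarrow> ((nat \<Rightarrow> 'a) \<Rightarrow> 'a) \<Rightarrow> ((nat \<Rightarrow> 'b) \<Rightarrow> 'b)" where
  "alpha_star \<alpha> \<phi> = (THE \<psi>. is_lift \<alpha> \<phi> \<psi>)"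

definition star_domain :: "('a \<Rightarrow> 'b) \<Rightarrow> ((nat \<Rightarrow> 'a) \<Rightarrow> 'a) set" where
  "star_domain \<alpha> = {\<phi>. \<exists>\<psi>. is_lift \<alpha> \<phi> \<psi>}"

end

theory Submission
  imports Defs
begin

lemma ext_surj: "surj \<alpha> \<Longrightarrow> surj (omega_ext \<alpha>)"
  unfolding surj_def omega_ext_def
proof
  fix t assume h: "\<forall>y. \<exists>x. y = \<alpha> x"
  have "t = (\<lambda>i. \<alpha> (inv \<alpha> (t i)))"
    using h by (metis f_inv_into_f rangeI surj_def)
  then show "\<exists>x. t = (\<lambda>i. \<alpha> (x i))" by (rule exI[where x="\<lambda>i. inv \<alpha> (t i)"])
qed

lemma lift_unique: "surj \<alpha> \<Longrightarrow> is_lift \<alpha> \<phi> \<psi>1 \<Longrightarrow> is_lift \<alpha> \<phi> \<psi>2 \<Longrightarrow> \<psi>1 = \<psi>2"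
  unfolding is_lift_def
proof -
  assume s: "surj \<alpha>" and a: "\<psi>1 \<circ> omega_ext \<alpha> = \<alpha> \<circ> \<phi>" "\<psi>2 \<circ> omega_ext \<alpha> = \<alpha> \<circ> \<phi>"
  show "\<psi>1 = \<psi>2"
  proof
    fix t
    obtain s' where "t = omega_ext \<alpha> s'" using ext_surj[OF s] by (metis surjD)
    then show "\<psi>1 t = \<psi>2 t" using a by (metis comp_apply)
  qed
qed

lemma star_eq: "surj \<alpha> \<Longrightarrow> is_lift \<alpha> \<phi> \<psi> \<Longrightarrow> alpha_star \<alpha> \<phi> = \<psi>"
  unfolding alpha_star_def using lift_unique by (metis the_equality)

lemma star_lift: "surj \<alpha> \<Longrightarrow> \<phi> \<in> star_domain \<alpha> \<Longrightarrow> is_lift \<alpha> \<phi> (alpha_star \<alpha> \<phi>)"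
  unfolding star_domain_def using star_eq by fastforce

lemma lift_e: "is_lift \<alpha> (\<lambda>s. s i) (\<lambda>t. t i)"
  unfolding is_lift_def omega_ext_def by auto

lemma lift_f: "tau_hom opsA opsB \<alpha> \<Longrightarrow> is_lift \<alpha> (opsA f) (opsB f)"
  unfolding is_lift_def omega_ext_def tau_hom_def by auto

lemma lift_q: "(\<And>i. is_lift \<alpha> (g i) (h i)) \<Longrightarrow> is_lift \<alpha> (qcomp g) (qcomp h)"
  unfolding is_lift_def
proof
  fix s assume a: "\<And>i. h i \<circ> omega_ext \<alpha> = \<alpha> \<circ> g i"
  have e: "\<And>i s. h i (omega_ext \<alpha> s) = \<alpha> (g i s)" using a by (metis comp_apply)
  have "qcomp h (omega_ext \<alpha> s) = h 0 (\<lambda>i. h (Suc i) (omega_ext \<alpha> s))"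
    by (simp add: qcomp_def)
  also have "\<dots> = h 0 (omega_ext \<alpha> (\<lambda>i. g (Suc i) s))"
    using e[of "Suc _" s] by (simp add: omega_ext_def)
  also have "\<dots> = \<alpha> (qcomp g s)" by (simp add: e qcomp_def)
  finally show "(qcomp h \<circ> omega_ext \<alpha>) s = (\<alpha> \<circ> qcomp g) s" by simp
qed

lemma lift_any: "surj \<alpha> \<Longrightarrow> is_lift \<alpha> (\<lambda>s. inv \<alpha> (\<psi> (omega_ext \<alpha> s))) \<psi>"
  unfolding is_lift_def by (auto simp: surj_f_inv_f)

theorem lemma5p3:
  fixes opsA :: "'f \<Rightarrow> (nat \<Rightarrow> 'a) \<Rightarrow> 'a"
    and opsB :: "'f \<Rightarrow> (nat \<Rightarrow> 'b) \<Rightarrow> 'b"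
    and \<alpha> :: "'a \<Rightarrow> 'b"
  assumes hom: "tau_hom opsA opsB \<alpha>"
    and surj: "surj \<alpha>"
  shows "(\<forall>\<phi> \<psi>1 \<psi>2. is_lift \<alpha> \<phi> \<psi>1 \<longrightarrow> is_lift \<alpha> \<phi> \<psi>2 \<longrightarrow> \<psi>1 = \<psi>2)
    \<and> clone_subuniverse (star_domain \<alpha>) (O_alg opsA)
    \<and> clone_hom (subalg (O_alg opsA) (star_domain \<alpha>)) (O_alg opsB) (alpha_star \<alpha>)
    \<and> alpha_star \<alpha> ` star_domain \<alpha> = cuniv (O_alg opsB)"
proof (intro conjI)
  show "\<forall>\<phi> \<psi>1 \<psi>2. is_lift \<alpha> \<phi> \<psi>1 \<longrightarrow> is_lift \<alpha> \<phi> \<psi>2 \<longrightarrow> \<psi>1 = \<psi>2"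
    using lift_unique[OF surj] by blast
  show "clone_subuniverse (star_domain \<alpha>) (O_alg opsA)"
    unfolding clone_subuniverse_def O_alg_def star_domain_def
    using lift_e lift_f[OF hom] lift_q by (auto, metis)
  show "clone_hom (subalg (O_alg opsA) (star_domain \<alpha>)) (O_alg opsB) (alpha_star \<alpha>)"
    unfolding clone_hom_def subalg_def O_alg_def
    using star_eq[OF surj] lift_e lift_f[OF hom] lift_q star_lift[OF surj]
    by (simp add: lift_q star_lift[OF surj] star_eq[OF surj] lift_e)
  show "alpha_star \<alpha> ` star_domain \<alpha> = cuniv (O_alg opsB)"
    unfolding O_alg_def star_domain_def
    using star_eq[OF surj] lift_any[OF surj] by (auto simp: image_def) (metis)
qed

end
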